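(* Suppose that $X(\mathbb{R})$ is a translation-invariant Banach function space. If $w(x):=e^{cx}$ for $x\in\mathbb{R}$ with a constant $c>0$, then the weighted Banach function space $X(\mathbb{R},w)$ does not satisfy the weak doubling property.
   Context: Banach function spaces on $\mathbb{R}^n$ (here $n=1$): let $\mathfrak{M}^+$ be the set of measurable functions with values in $[0,\infty]$. A Banach function norm $\rho:\mathfrak{M}^+\to[0,\infty]$ satisfies, for all $f,g,f_j\in\mathfrak{M}^+$, $a\ge0$, measurable $E$: (A1) $\rho(f)=0\iff f=0$ a.e., $\rho(af)=a\rho(f)$, $\rho(f+g)\le\rho(f)+\rho(g)$; (A2) $0\le g\le f$ a.e. implies $\rho(g)\le\rho(f)$; (A3) $0\le f_j\uparrow f$ a.e. implies $\rho(f_j)\uparrow\rho(f)$; (A4) $|E|<\infty$ implies $\rho(\chi_E)<\infty$; (A5) $|E|<\infty$ implies $\int_Ef\le C_E\rho(f)$ with $C_E$ independent of $f$. $X$ is the set of measurable complex $f$ with $\rho(|f|)<\infty$, $\|f\|_X=\rho(|f|)$. $X$ is translation-invariant if $\|u(\cdot-y)\|_X=\|u\|_X$ for all $y$ and $u\in X$. For a weight $w$, $X(\mathbb{R}^n,w)=\{f: fw\in X\}$ with $\|f\|_{X(\mathbb{R}^n,w)}=\|fw\|_X$. Weak doubling property: a Banach function space $Z(\mathbb{R}^n)$ has it if there is $\tau>1$ with $\liminf_{R\to\infty}\big(\inf_{y\in\mathbb{R}^n}\|\chi_{B(y,\tau R)}\|_{Z}/\|\chi_{B(y,R)}\|_{Z}\big)<\infty$,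 where $B(y,R)$ is the open ball of radius $R$ centered at $y$. *)

theory Defs
  imports "HOL-Analysis.Analysis"
begin

definition Mplus :: "(real \<Rightarrow> ennreal) set" where
  "Mplus = borel_measurable lebesgue"

definition banach_function_norm :: "((real \<Rightarrow> ennreal) \<Rightarrow> ennreal) \<Rightarrow> bool" where
  "banach_function_norm \<rho> \<longleftrightarrow>
     (\<forall>f\<in>Mplus. \<rho> f = 0 \<longleftrightarrow> (AE x in lebesgue. f x = 0)) \<and>
     (\<forall>f\<in>Mplus. \<forall>a::real. a \<ge> 0 \<longrightarrow> \<rho> (\<lambda>x. ennreal a * f x) = ennreal a * \<rho> f) \<and>
     (\<forall>f\<in>Mplus. \<forall>g\<in>Mplus. \<rho> (\<lambda>x. f x + g x) \<le> \<rho> f + \<rho> g) \<and>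
     (\<forall>f\<in>Mplus. \<forall>g\<in>Mplus. (AE x in lebesgue. g x \<le> f x) \<longrightarrow> \<rho> g \<le> \<rho> f) \<and>
     (\<forall>F::nat \<Rightarrow> real \<Rightarrow> ennreal. \<forall>f\<in>Mplus. (\<forall>j. F j \<in> Mplus) \<longrightarrow>
        (AE x in lebesgue. incseq (\<lambda>j. F j x) \<and> (\<lambda>j. F j x) \<longlonglongrightarrow> f x) \<longrightarrow>
        incseq (\<lambda>j. \<rho> (F j)) \<and> (\<lambda>j. \<rho> (F j)) \<longlonglongrightarrow> \<rho> f) \<and>
     (\<forall>E\<in>sets lebesgue. emeasure lebesgue E < \<infinity> \<longrightarrow> \<rho> (indicator E) < \<infinity>) \<and>
     (\<forall>E\<in>sets lebesgue. emeasure lebesgue E < \<infinity> \<longrightarrow>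
        (\<exists>C::real. \<forall>f\<in>Mplus. (\<integral>\<^sup>+x\<in>E. f x \<partial>lebesgue) \<le> ennreal C * \<rho> f))"

definition bfs :: "((real \<Rightarrow> ennreal) \<Rightarrow> ennreal) \<Rightarrow> (real \<Rightarrow> complex) set" where
  "bfs \<rho> = {f \<in> borel_measurable lebesgue. \<rho> (\<lambda>x. ennreal (cmod (f x))) < \<infinity>}"

definition bfs_norm :: "((real \<Rightarrow> ennreal) \<Rightarrow> ennreal) \<Rightarrow> (real \<Rightarrow> complex) \<Rightarrow> ennreal" where
  "bfs_norm \<rho> f = \<rho> (\<lambda>x. ennreal (cmod (f x)))"

definition translation_invariant :: "((real \<Rightarrow> ennreal) \<Rightarrow> ennreal) \<Rightarrow> bool" where
  "translation_invariant \<rho> \<longleftrightarrow>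
     (\<forall>u\<in>bfs \<rho>. \<forall>y::real. bfs_norm \<rho> (\<lambda>x. u (x - y)) = bfs_norm \<rho> u)"

definition weighted_norm :: "((real \<Rightarrow> ennreal) \<Rightarrow> ennreal) \<Rightarrow> (real \<Rightarrow> real) \<Rightarrow> (real \<Rightarrow> ennreal) \<Rightarrow> ennreal" where
  "weighted_norm \<rho> w f = \<rho> (\<lambda>x. f x * ennreal (w x))"

text \<open>Weak doubling property of a Banach function space Z with function norm \<rho>Z
  (note that the Z-norm of a characteristic function is \<rho>Z applied to it).\<close>
definition weak_doubling :: "((real \<Rightarrow> ennreal) \<Rightarrow> ennreal) \<Rightarrow> bool" where
  "weak_doubling \<rho>Z \<longleftrightarrow>
     (\<exists>\<tau>::real. \<tau> > 1 \<and>
        Liminf at_top (\<lambda>R::real. INF y::real.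
            \<rho>Z (indicator (ball y (\<tau> * R))) / \<rho>Z (indicator (ball y R))) < \<infinity>)"

end

theory Submission
  imports Defs
begin

lemma mbl: assumes "(f::real \<Rightarrow> 'b::topological_space) \<in> borel_measurable borel" shows "f \<in> borel_measurable lebesgue"
  by (rule measurable_completion) (unfold measurable_lborel2, rule assms)
lemma me: "(\<lambda>x::real. exp (c * x)) \<in> borel_measurable borel"
  by (intro borel_measurable_continuous_onI continuous_on_exp continuous_on_mult continuous_on_const continuous_on_id)
lemma mi: "(indicator (ball (y::real) R) :: real \<Rightarrow> 'a::{zero_neq_one,topological_space}) \<in> borel_measurable borel"
  by (rule borel_measurable_indicator) simp
lemma mh: "(\<lambda>x::real. indicator (ball y R) x * ennreal (exp (c * x))) \<in> borel_measurable borel"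
  by (rule borel_measurable_times_ennreal[OF mi measurable_compose[OF me measurable_ennreal]])
lemma mur: "(\<lambda>x::real. indicator (ball y R) x * exp (c * x)) \<in> borel_measurable borel"
  by (rule borel_measurable_times[OF mi me])
lemma muc: "(\<lambda>x::real. complex_of_real (indicator (ball y R) x * exp (c * x))) \<in> borel_measurable borel"
  by (rule measurable_compose[OF mur borel_measurable_of_real])
lemma msh: "(\<lambda>x::real. x - s) \<in> borel_measurable borel"
  by (intro borel_measurable_continuous_onI continuous_on_diff continuous_on_const continuous_on_id)
lemma mus: "(\<lambda>x::real. ennreal (cmod (complex_of_real (indicator (ball y R) (x - s) * exp (c * (x - s)))))) \<in> borel_measurable borel"
  by (rule measurable_compose[OF measurable_compose[OF measurable_compose[OF msh muc] borel_measurable_norm] measurable_ennreal])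

lemma key:
  fixes \<rho> :: "(real \<Rightarrow> ennreal) \<Rightarrow> ennreal" and c :: real
  assumes bfn: "banach_function_norm \<rho>"
    and ti: "translation_invariant \<rho>"
    and c: "c > 0" and R: "R > 0" and s: "s \<ge> 0"
  shows "\<rho> (\<lambda>x. indicator (ball y R) x * ennreal (exp (c * x))) < \<infinity>"
    and "0 < \<rho> (\<lambda>x. indicator (ball y R) x * ennreal (exp (c * x)))"
    and "ennreal (exp (c * s)) * \<rho> (\<lambda>x. indicator (ball y R) x * ennreal (exp (c * x)))
         \<le> \<rho> (\<lambda>x. indicator (ball y (R + s)) x * ennreal (exp (c * x)))"
proof -
  note D = bfn[unfolded banach_function_norm_def]
  have A1: "\<And>f. f\<in>Mplus \<Longrightarrow> \<rho> f = 0 \<longleftrightarrow> (AE x in lebesgue. f x = 0)"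
    using conjunct1[OF D] by blast
  have hom: "\<And>f a. f\<in>Mplus \<Longrightarrow> a \<ge> 0 \<Longrightarrow> \<rho> (\<lambda>x. ennreal a * f x) = ennreal a * \<rho> f"
    using conjunct1[OF conjunct2[OF D]] by blast
  have mono: "\<And>f g. f\<in>Mplus \<Longrightarrow> g\<in>Mplus \<Longrightarrow> (AE x in lebesgue. g x \<le> f x) \<Longrightarrow> \<rho> g \<le> \<rho> f"
    using conjunct1[OF conjunct2[OF conjunct2[OF conjunct2[OF D]]]] by blast
  have A4: "\<And>E. E\<in>sets lebesgue \<Longrightarrow> emeasure lebesgue E < \<infinity> \<Longrightarrow> \<rho> (indicator E) < \<infinity>"
    using conjunct1[OF conjunct2[OF conjunct2[OF conjunct2[OF conjunct2[OF conjunct2[OF D]]]]]] by blast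
  define h where "h = (\<lambda>y R x. indicator (ball y R) x * ennreal (exp (c * x)) :: ennreal)"
  have hM: "h y' R' \<in> Mplus" for y' R'
    unfolding h_def Mplus_def by (rule mbl[OF mh])
  have ballS: "ball y' R' \<in> sets lebesgue" for y' R' :: real by simp
  have ballfin: "emeasure lebesgue (ball y' R') < \<infinity>" if "R' > 0" for y' R' :: real
    using that by (simp add: ball_eq_greaterThanLessThan)
  have fin: "\<rho> (h y R) < \<infinity>"
  proof -
    have "\<rho> (h y R) \<le> \<rho> (\<lambda>x. ennreal (exp (c * (y + R))) * indicator (ball y R) x)"
    proof (rule mono)
      show "(\<lambda>x. ennreal (exp (c * (y + R))) * indicator (ball y R) x) \<in> Mplus"
        unfolding Mplus_def by (rule mbl, rule borel_measurable_times_ennreal[OF _ mi]) simp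
      show "h y R \<in> Mplus" by (rule hM)
      show "AE x in lebesgue. h y R x \<le> ennreal (exp (c * (y + R))) * indicator (ball y R) x"
      proof (rule AE_I2)
        fix x
        show "h y R x \<le> ennreal (exp (c * (y + R))) * indicator (ball y R) x"
        proof (cases "x \<in> ball y R")
          case True
          then have "x \<le> y + R" by (auto simp: dist_real_def)
          then have "exp (c * x) \<le> exp (c * (y + R))" using c by simp
          then show ?thesis using True by (simp add: h_def ennreal_leI)
        qed (simp add: h_def)
      qed
    qed
    also have "\<dots> = ennreal (exp (c * (y + R))) * \<rho> (indicator (ball y R))"
      by (rule hom) (auto simp: Mplus_def intro: mbl mi)
    also have "\<dots> < \<infinity>"
      using A4[OF ballS ballfin[OF R]] by (simp add: ennreal_mult_less_top)
    finally show ?thesis .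
  qed
  then show "\<rho> (\<lambda>x. indicator (ball y R) x * ennreal (exp (c * x))) < \<infinity>" by (simp add: h_def)
  show "0 < \<rho> (\<lambda>x. indicator (ball y R) x * ennreal (exp (c * x)))"
  proof -
    have hz: "h y R x = 0 \<longleftrightarrow> x \<notin> ball y R" for x
      by (cases "x \<in> ball y R") (simp_all add: h_def)
    have st: "{x \<in> space lebesgue. \<not> h y R x = 0} = ball y R"
      using hz by (auto simp: ball_def)
    have ae: "(AE x in lebesgue. h y R x = 0) = (emeasure lebesgue (ball y R) = 0)"
      by (rule AE_iff_measurable[OF ballS st])
    have "emeasure lebesgue (ball y R) = ennreal (2 * R)"
      unfolding ball_eq_greaterThanLessThan using R by simp
    then have "emeasure lebesgue (ball y R) \<noteq> 0" using R by simp
    then have "\<not> (AE x in lebesgue. h y R x = 0)" using ae by simp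
    then have "\<rho> (h y R) \<noteq> 0" using A1[OF hM] by blast
    then show ?thesis by (simp add: h_def zero_less_iff_neq_zero)
  qed
  define u where "u = (\<lambda>x. complex_of_real (indicator (ball y R) x * exp (c * x)))"
  have uabs: "(\<lambda>x. ennreal (cmod (u x))) = h y R"
    by (rule ext) (auto simp: u_def h_def indicator_def)
  have ubfs: "u \<in> bfs \<rho>"
    unfolding bfs_def using fin uabs mbl[OF muc] by (auto simp: u_def)
  have tr: "bfs_norm \<rho> (\<lambda>x. u (x - s)) = bfs_norm \<rho> u"
    using ti ubfs unfolding translation_invariant_def by blast
  have shifted: "(\<lambda>x. ennreal (exp (c * s)) * ennreal (cmod (u (x - s)))) = h (y + s) R"
  proof
    fix x
    have e: "exp (c * s) * exp (c * (x - s)) = exp (c * x)"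
    proof -
      have "c * s + c * (x - s) = c * x" by (simp add: algebra_simps)
      then show ?thesis by (metis exp_add)
    qed
    have m: "(x - s \<in> ball y R) = (x \<in> ball (y + s) R)"
      by (simp add: dist_real_def; arith)
    show "ennreal (exp (c * s)) * ennreal (cmod (u (x - s))) = h (y + s) R x"
      using e m by (auto simp: u_def h_def indicator_def ennreal_mult[symmetric])
  qed
  have sM: "(\<lambda>x. ennreal (cmod (u (x - s)))) \<in> Mplus"
    unfolding Mplus_def u_def by (rule mbl[OF mus])
  have "ennreal (exp (c * s)) * \<rho> (h y R) = ennreal (exp (c * s)) * \<rho> (\<lambda>x. ennreal (cmod (u (x - s))))"
    using tr uabs by (simp add: bfs_norm_def)
  also have "\<dots> = \<rho> (h (y + s) R)"
    using hom[OF sM, of "exp (c * s)"] shifted by simp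
  finally have calc: "ennreal (exp (c * s)) * \<rho> (h y R) = \<rho> (h (y + s) R)" .
  have hle: "h (y + s) R x \<le> h y (R + s) x" for x
  proof (cases "x \<in> ball (y + s) R")
    case True
    then have "x \<in> ball y (R + s)"
      using s by (simp add: dist_real_def; arith)
    then show ?thesis using True by (simp add: h_def)
  qed (simp add: h_def)
  have "\<rho> (h (y + s) R) \<le> \<rho> (h y (R + s))"
    by (rule mono[OF hM hM]) (rule AE_I2, rule hle)
  then have fl: "ennreal (exp (c * s)) * \<rho> (h y R) \<le> \<rho> (h y (R + s))"
    by (rule ord_eq_le_trans[OF calc])
  show "ennreal (exp (c * s)) * \<rho> (\<lambda>x. indicator (ball y R) x * ennreal (exp (c * x)))
         \<le> \<rho> (\<lambda>x. indicator (ball y (R + s)) x * ennreal (exp (c * x)))"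
    using fl unfolding h_def .
qed

theorem theorem3p6:
  fixes \<rho> :: "(real \<Rightarrow> ennreal) \<Rightarrow> ennreal" and c :: real
  assumes "banach_function_norm \<rho>"
    and "translation_invariant \<rho>"
    and "c > 0"
  shows "\<not> weak_doubling (weighted_norm \<rho> (\<lambda>x. exp (c * x)))"
proof
  assume "weak_doubling (weighted_norm \<rho> (\<lambda>x. exp (c * x)))"
  then obtain \<tau> :: real where t: "\<tau> > 1" and lt: "Liminf at_top (\<lambda>R::real. INF y::real.
            weighted_norm \<rho> (\<lambda>x. exp (c * x)) (indicator (ball y (\<tau> * R))) /
            weighted_norm \<rho> (\<lambda>x. exp (c * x)) (indicator (ball y R))) < \<infinity>"
    unfolding weak_doubling_def by blast
  define N where "N = (\<lambda>y R. \<rho> (\<lambda>x. indicator (ball y R) x * ennreal (exp (c * x))))"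
  have ev: "\<forall>\<^sub>F R in at_top. ennreal (exp (c * (\<tau> - 1) * R)) \<le> (INF y::real.
            weighted_norm \<rho> (\<lambda>x. exp (c * x)) (indicator (ball y (\<tau> * R))) /
            weighted_norm \<rho> (\<lambda>x. exp (c * x)) (indicator (ball y R)))"
    using eventually_gt_at_top[of "0::real"]
  proof eventually_elim
    case (elim R)
    show ?case
    proof (rule INF_greatest)
      fix y :: real
      have s: "(\<tau> - 1) * R \<ge> 0" using t elim by simp
      have f: "N y R < \<infinity>" and p: "0 < N y R"
        and le: "ennreal (exp (c * ((\<tau> - 1) * R))) * N y R \<le> N y (R + (\<tau> - 1) * R)"
        using key[OF assms elim s, of y] by (simp_all add: N_def)
      have eq: "R + (\<tau> - 1) * R = \<tau> * R" by (simp add: algebra_simps)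
      have "ennreal (exp (c * (\<tau> - 1) * R)) \<le> N y (\<tau> * R) / N y R"
      proof -
        have "ennreal (exp (c * (\<tau> - 1) * R)) = ennreal (exp (c * ((\<tau> - 1) * R))) * N y R / N y R"
          using f p by (simp add: ennreal_mult_divide_eq mult.assoc)
        also have "\<dots> \<le> N y (\<tau> * R) / N y R"
          using le eq by (intro divide_right_mono_ennreal) simp
        finally show ?thesis .
      qed
      then show "ennreal (exp (c * (\<tau> - 1) * R)) \<le>
            weighted_norm \<rho> (\<lambda>x. exp (c * x)) (indicator (ball y (\<tau> * R))) /
            weighted_norm \<rho> (\<lambda>x. exp (c * x)) (indicator (ball y R))"
        by (simp add: N_def weighted_norm_def)
    qed
  qed
  have "((\<lambda>R. ennreal (exp (c * (\<tau> - 1) * R))) \<longlongrightarrow> top) at_top"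
    unfolding ennreal_tendsto_top_eq_at_top
  proof -
    have k: "c * (\<tau> - 1) > 0" using t \<open>c > 0\<close> by simp
    have "filterlim (\<lambda>R. c * (\<tau> - 1) * R) at_top at_top"
      by (rule filterlim_tendsto_pos_mult_at_top[OF tendsto_const k filterlim_ident])
    then show "filterlim (\<lambda>R. exp (c * (\<tau> - 1) * R)) at_top at_top"
      by (rule filterlim_compose[OF exp_at_top])
  qed
  then have "Liminf at_top (\<lambda>R. ennreal (exp (c * (\<tau> - 1) * R))) = top"
    by (intro lim_imp_Liminf) auto
  with Liminf_mono[OF ev] lt show False by (simp add: top_unique)
qed

end
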